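(* Let $k$ be a field, $(C,\Delta)$ a coassociative coalgebra over $k$ that is skew cocommutative, i.e. $\tau\circ\Delta=-\Delta$ where $\tau(x\otimes y)=y\otimes x$, and let $(L,[\,,\,])$ be a Lie algebra over $k$. Let $\Phi(f\otimes g)(c)=\sum[f(c_{(1)}),g(c_{(2)})]$ for $f,g\in Hom(C,L)$, $\Delta(c)=\sum c_{(1)}\otimes c_{(2)}$. Then $\Phi$ is symmetric, $\Phi(g\otimes f)=\Phi(f\otimes g)$, and satisfies the Jacobi identity $\Phi(f\otimes\Phi(g\otimes h))+\Phi(g\otimes\Phi(h\otimes f))+\Phi(h\otimes\Phi(f\otimes g))=0$ for all $f,g,h\in Hom(C,L)$.
   Context: $Hom(C,L)$ denotes the vector space of $k$-linear maps $C\to L$. *)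

theory Defs
  imports Main "HOL.Vector_Spaces"
begin

definition bilinear_map ::
  "('k::field \<Rightarrow> 'a::ab_group_add \<Rightarrow> 'a) \<Rightarrow> ('k \<Rightarrow> 'b::ab_group_add \<Rightarrow> 'b)
   \<Rightarrow> ('k \<Rightarrow> 'e::ab_group_add \<Rightarrow> 'e) \<Rightarrow> ('a \<Rightarrow> 'b \<Rightarrow> 'e) \<Rightarrow> bool" where
  "bilinear_map sa sb se \<beta> \<longleftrightarrow>
     (\<forall>y. Vector_Spaces.linear sa se (\<lambda>x. \<beta> x y)) \<and> (\<forall>x. Vector_Spaces.linear sb se (\<beta> x))"

definition trilinear_form ::
  "('k::field \<Rightarrow> 'c::ab_group_add \<Rightarrow> 'c) \<Rightarrow> ('c \<Rightarrow> 'c \<Rightarrow> 'c \<Rightarrow> 'k) \<Rightarrow> bool" where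
  "trilinear_form s \<tau> \<longleftrightarrow>
     (\<forall>y z. Vector_Spaces.linear s (*) (\<lambda>x. \<tau> x y z)) \<and>
     (\<forall>x z. Vector_Spaces.linear s (*) (\<lambda>y. \<tau> x y z)) \<and>
     (\<forall>x y. Vector_Spaces.linear s (*) (\<lambda>z. \<tau> x y z))"

text \<open>An element of C \<otimes> C is represented by a finite list of pairs (the sum of
  the corresponding simple tensors); an element of C \<otimes> C \<otimes> C by a list of triples.
  Two representatives denote the same tensor iff every bilinear (trilinear) form
  C \<times> C \<rightarrow> k (C \<times> C \<times> C \<rightarrow> k) takes the same value on them (valid over a field).\<close>

definition teq2 :: "('k::field \<Rightarrow> 'c::ab_group_add \<Rightarrow> 'c) \<Rightarrow> ('c \<times> 'c) list \<Rightarrow> ('c \<times> 'c) list \<Rightarrow> bool" where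
  "teq2 s xs ys \<longleftrightarrow> (\<forall>\<beta> :: 'c \<Rightarrow> 'c \<Rightarrow> 'k. bilinear_map s s (*) \<beta> \<longrightarrow>
     sum_list (map (\<lambda>(a,b). \<beta> a b) xs) = sum_list (map (\<lambda>(a,b). \<beta> a b) ys))"

definition teq3 :: "('k::field \<Rightarrow> 'c::ab_group_add \<Rightarrow> 'c) \<Rightarrow> ('c \<times> 'c \<times> 'c) list \<Rightarrow> ('c \<times> 'c \<times> 'c) list \<Rightarrow> bool" where
  "teq3 s xs ys \<longleftrightarrow> (\<forall>\<tau> :: 'c \<Rightarrow> 'c \<Rightarrow> 'c \<Rightarrow> 'k. trilinear_form s \<tau> \<longrightarrow>
     sum_list (map (\<lambda>(a,b,c). \<tau> a b c) xs) = sum_list (map (\<lambda>(a,b,c). \<tau> a b c) ys))"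

text \<open>A (not necessarily counital) coassociative coalgebra: a vector space C with a
  linear comultiplication \<Delta> : C \<rightarrow> C \<otimes> C such that (\<Delta> \<otimes> id)\<Delta> = (id \<otimes> \<Delta>)\<Delta>.\<close>

definition coassoc_coalgebra :: "('k::field \<Rightarrow> 'c::ab_group_add \<Rightarrow> 'c) \<Rightarrow> ('c \<Rightarrow> ('c \<times> 'c) list) \<Rightarrow> bool" where
  "coassoc_coalgebra s \<Delta> \<longleftrightarrow>
     vector_space s \<and>
     (\<forall>x y. teq2 s (\<Delta> (x + y)) (\<Delta> x @ \<Delta> y)) \<and>
     (\<forall>r x. teq2 s (\<Delta> (s r x)) (map (\<lambda>(a,b). (s r a, b)) (\<Delta> x))) \<and>
     (\<forall>c. teq3 s
        (concat (map (\<lambda>(a,b). map (\<lambda>(a1,a2). (a1,a2,b)) (\<Delta> a)) (\<Delta> c)))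
        (concat (map (\<lambda>(a,b). map (\<lambda>(b1,b2). (a,b1,b2)) (\<Delta> b)) (\<Delta> c))))"

definition skew_cocommutative :: "('k::field \<Rightarrow> 'c::ab_group_add \<Rightarrow> 'c) \<Rightarrow> ('c \<Rightarrow> ('c \<times> 'c) list) \<Rightarrow> bool" where
  "skew_cocommutative s \<Delta> \<longleftrightarrow>
     (\<forall>c. teq2 s (map (\<lambda>(a,b). (b,a)) (\<Delta> c)) (map (\<lambda>(a,b). (- a, b)) (\<Delta> c)))"

definition lie_algebra :: "('k::field \<Rightarrow> 'l::ab_group_add \<Rightarrow> 'l) \<Rightarrow> ('l \<Rightarrow> 'l \<Rightarrow> 'l) \<Rightarrow> bool" where
  "lie_algebra s br \<longleftrightarrow>
     vector_space s \<and> bilinear_map s s s br \<and>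
     (\<forall>x. br x x = 0) \<and>
     (\<forall>x y z. br x (br y z) + br y (br z x) + br z (br x y) = 0)"

definition Phi :: "('c \<Rightarrow> ('c \<times> 'c) list) \<Rightarrow> ('l \<Rightarrow> 'l \<Rightarrow> 'l::ab_group_add) \<Rightarrow> ('c \<Rightarrow> 'l) \<Rightarrow> ('c \<Rightarrow> 'l) \<Rightarrow> 'c \<Rightarrow> 'l" where
  "Phi \<Delta> br f g = (\<lambda>c. sum_list (map (\<lambda>(a,b). br (f a) (g b)) (\<Delta> c)))"

end

theory Submission imports Defs begin

lemma lin_add: "Vector_Spaces.linear s1 s2 f \<Longrightarrow> f (x + y) = f x + f y"
  by (simp add: linear_iff)
lemma lin_zero: "Vector_Spaces.linear s1 s2 f \<Longrightarrow> f 0 = 0"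
  by (metis add_cancel_right_right lin_add)
lemma lin_neg: "Vector_Spaces.linear s1 s2 f \<Longrightarrow> f (- x) = - f x"
  by (metis add.right_inverse eq_neg_iff_add_eq_0 lin_add lin_zero)
lemma lin_sum_list: "Vector_Spaces.linear s1 s2 f \<Longrightarrow> f (sum_list (map g xs)) = sum_list (map (\<lambda>x. f (g x)) xs)"
  by (induction xs) (auto simp: lin_zero lin_add)
lemma lin_comp: "Vector_Spaces.linear s1 s2 f \<Longrightarrow> Vector_Spaces.linear s2 s3 g \<Longrightarrow> Vector_Spaces.linear s1 s3 (\<lambda>x. g (f x))"
  using Vector_Spaces.linear_compose[of s1 s2 f s3 g] by (simp add: o_def)

lemma vs_field: "vector_space ((*) :: 'k::field \<Rightarrow> 'k \<Rightarrow> 'k)"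
  by unfold_locales (auto simp: algebra_simps)

lemma separate:
  assumes vs: "vector_space (s :: 'k::field \<Rightarrow> 'l::ab_group_add \<Rightarrow> 'l)"
    and all: "\<And>\<phi>. Vector_Spaces.linear s ((*) :: 'k \<Rightarrow> 'k \<Rightarrow> 'k) \<phi> \<Longrightarrow> \<phi> v = 0"
  shows "v = 0"
proof (rule ccontr)
  assume v: "v \<noteq> 0"
  interpret vp: vector_space_pair s "(*) :: 'k \<Rightarrow> 'k \<Rightarrow> 'k"
    using vs vs_field by (simp add: vector_space_pair_def)
  have "vp.vs1.independent {v}"
    using v vp.vs1.independent_insert[of v "{}"] vp.vs1.independent_empty
      vp.vs1.span_empty by auto
  then obtain \<phi> where "Vector_Spaces.linear s (*) \<phi>" "\<phi> v = (1::'k)"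
    using vp.linear_independent_extend[of "{v}" "\<lambda>_. 1"] by auto
  with all show False by fastforce
qed

lemma bil_comp:
  assumes bl: "bilinear_map sL sL sL br" and F: "Vector_Spaces.linear sC sL F"
    and G: "Vector_Spaces.linear sC sL G" and ph: "Vector_Spaces.linear sL (*) \<phi>"
  shows "bilinear_map sC sC (*) (\<lambda>x y. \<phi> (br (F x) (G y)))"
  unfolding bilinear_map_def
proof safe
  fix y show "Vector_Spaces.linear sC (*) (\<lambda>x. \<phi> (br (F x) (G y)))"
    using lin_comp[OF lin_comp[OF F, of sL "\<lambda>x. br x (G y)"] ph] bl
    unfolding bilinear_map_def by blast
next
  fix x show "Vector_Spaces.linear sC (*) (\<lambda>y. \<phi> (br (F x) (G y)))"
    using lin_comp[OF lin_comp[OF G, of sL "br (F x)"] ph] bl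
    unfolding bilinear_map_def by blast
qed

lemma tril_comp:
  assumes bl: "bilinear_map sL sL sL br" and F: "Vector_Spaces.linear sC sL F"
    and G: "Vector_Spaces.linear sC sL G" and H: "Vector_Spaces.linear sC sL H"
    and ph: "Vector_Spaces.linear sL (*) \<phi>"
  shows "trilinear_form sC (\<lambda>x y z. \<phi> (br (F x) (br (G y) (H z))))"
  unfolding trilinear_form_def
proof safe
  fix y z show "Vector_Spaces.linear sC (*) (\<lambda>x. \<phi> (br (F x) (br (G y) (H z))))"
    using lin_comp[OF lin_comp[OF F, of sL "\<lambda>x. br x (br (G y) (H z))"] ph] bl
    unfolding bilinear_map_def by blast
next
  fix x z show "Vector_Spaces.linear sC (*) (\<lambda>y. \<phi> (br (F x) (br (G y) (H z))))"
    using lin_comp[OF lin_comp[OF lin_comp[OF G, of sL "\<lambda>y. br y (H z)"], of sL "br (F x)"] ph] bl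
    unfolding bilinear_map_def by blast
next
  fix x y show "Vector_Spaces.linear sC (*) (\<lambda>z. \<phi> (br (F x) (br (G y) (H z))))"
    using lin_comp[OF lin_comp[OF lin_comp[OF H, of sL "br (G y)"], of sL "br (F x)"] ph] bl
    unfolding bilinear_map_def by blast
qed

lemma tril_perm1: "trilinear_form s \<tau> \<Longrightarrow> trilinear_form s (\<lambda>x y z. \<tau> y x z)"
  unfolding trilinear_form_def by blast
lemma tril_perm2: "trilinear_form s \<tau> \<Longrightarrow> trilinear_form s (\<lambda>x y z. \<tau> x z y)"
  unfolding trilinear_form_def by blast
lemma tril_perm3: "trilinear_form s \<tau> \<Longrightarrow> trilinear_form s (\<lambda>x y z. \<tau> z x y)"
  unfolding trilinear_form_def by blast

definition NR :: "('c \<Rightarrow> ('c \<times> 'c) list) \<Rightarrow> 'c \<Rightarrow> ('c \<Rightarrow> 'c \<Rightarrow> 'c \<Rightarrow> 'k::ab_group_add) \<Rightarrow> 'k" where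
  "NR \<Delta> c \<tau> = sum_list (map (\<lambda>(a,b). sum_list (map (\<lambda>(b1,b2). \<tau> a b1 b2) (\<Delta> b))) (\<Delta> c))"
definition NL :: "('c \<Rightarrow> ('c \<times> 'c) list) \<Rightarrow> 'c \<Rightarrow> ('c \<Rightarrow> 'c \<Rightarrow> 'c \<Rightarrow> 'k::ab_group_add) \<Rightarrow> 'k" where
  "NL \<Delta> c \<tau> = sum_list (map (\<lambda>(a,b). sum_list (map (\<lambda>(a1,a2). \<tau> a1 a2 b) (\<Delta> a))) (\<Delta> c))"

lemma sum_list_neg_map: "sum_list (map (\<lambda>x. - f x) xs) = - sum_list (map f xs)"
  for f :: "_ \<Rightarrow> 'a::ab_group_add"
  by (induction xs) auto

lemma sum_list_concat_map: "sum_list (map f (concat xss)) = sum_list (map (\<lambda>xs. sum_list (map f xs)) xss)"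
  for f :: "_ \<Rightarrow> 'a::comm_monoid_add"
  by (induction xss) auto

lemma sum_list_concat': "sum_list (concat xss) = sum_list (map sum_list xss)"
  for xss :: "'a::comm_monoid_add list list"
  by (induction xss) auto

lemma NL_NR:
  assumes "coassoc_coalgebra s \<Delta>" "trilinear_form s \<tau>"
  shows "NL \<Delta> c \<tau> = NR \<Delta> c \<tau>"
proof -
  have "teq3 s
        (concat (map (\<lambda>(a,b). map (\<lambda>(a1,a2). (a1,a2,b)) (\<Delta> a)) (\<Delta> c)))
        (concat (map (\<lambda>(a,b). map (\<lambda>(b1,b2). (a,b1,b2)) (\<Delta> b)) (\<Delta> c)))"
    using assms(1) unfolding coassoc_coalgebra_def by blast
  then have "sum_list (map (\<lambda>(a,b,c). \<tau> a b c) (concat (map (\<lambda>(a,b). map (\<lambda>(a1,a2). (a1,a2,b)) (\<Delta> a)) (\<Delta> c))))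
    = sum_list (map (\<lambda>(a,b,c). \<tau> a b c) (concat (map (\<lambda>(a,b). map (\<lambda>(b1,b2). (a,b1,b2)) (\<Delta> b)) (\<Delta> c))))"
    using assms(2) unfolding teq3_def by blast
  then show ?thesis unfolding NL_def NR_def
    by (simp add: map_concat sum_list_concat_map sum_list_concat' o_def case_prod_unfold)
qed

lemma skew_sum:
  assumes sk: "skew_cocommutative s \<Delta>" and bl: "bilinear_map s s (*) \<beta>"
  shows "sum_list (map (\<lambda>(p,q). \<beta> q p) (\<Delta> b)) = - sum_list (map (\<lambda>(p,q). \<beta> p q) (\<Delta> b))"
proof -
  have "teq2 s (map (\<lambda>(a,b). (b,a)) (\<Delta> b)) (map (\<lambda>(a,b). (- a, b)) (\<Delta> b))"
    using sk unfolding skew_cocommutative_def by blast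
  then have "sum_list (map (\<lambda>(a,b). \<beta> a b) (map (\<lambda>(a,b). (b,a)) (\<Delta> b)))
     = sum_list (map (\<lambda>(a,b). \<beta> a b) (map (\<lambda>(a,b). (- a, b)) (\<Delta> b)))"
    using bl unfolding teq2_def by blast
  moreover have "\<And>a q. \<beta> (- a) q = - \<beta> a q"
    using bl unfolding bilinear_map_def by (metis lin_neg)
  ultimately show ?thesis
    by (simp add: o_def case_prod_unfold sum_list_neg_map)
qed

lemma NR_swap23:
  assumes sk: "skew_cocommutative s \<Delta>" and tr: "trilinear_form s \<tau>"
  shows "NR \<Delta> c (\<lambda>x y z. \<tau> x z y) = - NR \<Delta> c \<tau>"
proof -
  have "\<And>a. bilinear_map s s (*) (\<tau> a)"
    using tr unfolding trilinear_form_def bilinear_map_def by blast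
  then have "\<And>a b. sum_list (map (\<lambda>(p,q). \<tau> a q p) (\<Delta> b)) = - sum_list (map (\<lambda>(p,q). \<tau> a p q) (\<Delta> b))"
    using skew_sum[OF sk] by blast
  then show ?thesis unfolding NR_def
    by (simp add: case_prod_unfold sum_list_neg_map)
qed

lemma NL_swap12:
  assumes sk: "skew_cocommutative s \<Delta>" and tr: "trilinear_form s \<tau>"
  shows "NL \<Delta> c (\<lambda>x y z. \<tau> y x z) = - NL \<Delta> c \<tau>"
proof -
  have "\<And>b. bilinear_map s s (*) (\<lambda>x y. \<tau> x y b)"
    using tr unfolding trilinear_form_def bilinear_map_def by blast
  then have "\<And>a b. sum_list (map (\<lambda>(p,q). \<tau> q p b) (\<Delta> a)) = - sum_list (map (\<lambda>(p,q). \<tau> p q b) (\<Delta> a))"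
    using skew_sum[OF sk] by blast
  then show ?thesis unfolding NL_def
    by (simp add: case_prod_unfold sum_list_neg_map)
qed

lemma NR_cyc:
  assumes co: "coassoc_coalgebra s \<Delta>" and sk: "skew_cocommutative s \<Delta>" and tr: "trilinear_form s \<tau>"
  shows "NR \<Delta> c \<tau> = NR \<Delta> c (\<lambda>x y z. \<tau> z x y)"
proof -
  have "NR \<Delta> c \<tau> = NL \<Delta> c \<tau>" using NL_NR[OF co tr] by simp
  also have "\<dots> = - NL \<Delta> c (\<lambda>x y z. \<tau> y x z)"
    using NL_swap12[OF sk tril_perm1[OF tr]] by simp
  also have "\<dots> = - NR \<Delta> c (\<lambda>x y z. \<tau> y x z)"
    using NL_NR[OF co tril_perm1[OF tr]] by simp
  also have "\<dots> = NR \<Delta> c (\<lambda>x y z. \<tau> z x y)"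
    using NR_swap23[OF sk tril_perm3[OF tr]] by simp
  finally show ?thesis .
qed

lemma br_antisym:
  assumes "lie_algebra sL br"
  shows "br x y = - br y x"
proof -
  have bl: "bilinear_map sL sL sL br" and al: "\<And>x. br x x = 0"
    using assms unfolding lie_algebra_def by auto
  have "0 = br (x + y) (x + y)" using al by simp
  also have "\<dots> = br x x + br y x + (br x y + br y y)"
  proof -
    have l1: "Vector_Spaces.linear sL sL (\<lambda>a. br a (x + y))" and l2: "Vector_Spaces.linear sL sL (br x)"
      and l3: "Vector_Spaces.linear sL sL (br y)"
      using bl unfolding bilinear_map_def by auto
    have "br (x + y) (x + y) = br x (x + y) + br y (x + y)" using lin_add[OF l1] .
    also have "\<dots> = (br x x + br x y) + (br y x + br y y)" using lin_add[OF l2] lin_add[OF l3] by simp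
    finally show ?thesis by (simp add: algebra_simps)
  qed
  finally show ?thesis using al by (simp add: eq_neg_iff_add_eq_0 add.commute)
qed

lemma NR_Phi:
  assumes bl: "bilinear_map sL sL sL br" and ph: "Vector_Spaces.linear sL (*) \<phi>"
  shows "\<phi> (Phi \<Delta> br f (Phi \<Delta> br g h) c) = NR \<Delta> c (\<lambda>x y z. \<phi> (br (f x) (br (g y) (h z))))"
proof -
  have "\<And>u. Vector_Spaces.linear sL sL (br u)" using bl unfolding bilinear_map_def by blast
  then have e: "\<And>u G xs. br u (sum_list (map G xs)) = sum_list (map (\<lambda>x. br u (G x)) xs)"
    using lin_sum_list by blast
  show ?thesis unfolding NR_def Phi_def
    by (simp add: lin_sum_list[OF ph] e case_prod_unfold)
qed

lemma NR_add3: "NR \<Delta> c t1 + NR \<Delta> c t2 + NR \<Delta> c t3 = NR \<Delta> c (\<lambda>x y z. t1 x y z + t2 x y z + t3 x y z)"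
  unfolding NR_def by (simp add: case_prod_unfold sum_list_addf)

lemma NR_zero: "NR \<Delta> c (\<lambda>x y z. 0) = 0"
  unfolding NR_def by (simp add: case_prod_unfold)

theorem corollary2:
  fixes sC :: "'k::field \<Rightarrow> 'c::ab_group_add \<Rightarrow> 'c"
    and sL :: "'k \<Rightarrow> 'l::ab_group_add \<Rightarrow> 'l"
    and \<Delta> :: "'c \<Rightarrow> ('c \<times> 'c) list"
    and br :: "'l \<Rightarrow> 'l \<Rightarrow> 'l"
  assumes "coassoc_coalgebra sC \<Delta>"
    and "skew_cocommutative sC \<Delta>"
    and "lie_algebra sL br"
  shows "(\<forall>f g. Vector_Spaces.linear sC sL f \<longrightarrow> Vector_Spaces.linear sC sL g \<longrightarrow>
            Phi \<Delta> br g f = Phi \<Delta> br f g)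
       \<and> (\<forall>f g h. Vector_Spaces.linear sC sL f \<longrightarrow> Vector_Spaces.linear sC sL g \<longrightarrow>
            Vector_Spaces.linear sC sL h \<longrightarrow>
            (\<forall>c. Phi \<Delta> br f (Phi \<Delta> br g h) c + Phi \<Delta> br g (Phi \<Delta> br h f) c
                 + Phi \<Delta> br h (Phi \<Delta> br f g) c = 0))"
proof (intro conjI allI impI)
  have vs: "vector_space sL" and bl: "bilinear_map sL sL sL br"
    and jac: "\<And>x y z. br x (br y z) + br y (br z x) + br z (br x y) = 0"
    using assms(3) unfolding lie_algebra_def by auto
  {
    fix f g :: "'c \<Rightarrow> 'l"
    assume f: "Vector_Spaces.linear sC sL f" and g: "Vector_Spaces.linear sC sL g"
    show "Phi \<Delta> br g f = Phi \<Delta> br f g"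
    proof
      fix c
      have "Phi \<Delta> br g f c - Phi \<Delta> br f g c = 0"
      proof (rule separate[OF vs])
        fix \<phi> :: "'l \<Rightarrow> 'k" assume ph: "Vector_Spaces.linear sL (*) \<phi>"
        have b: "bilinear_map sC sC (*) (\<lambda>x y. \<phi> (br (g x) (f y)))"
          by (rule bil_comp[OF bl g f ph])
        have gneg: "\<And>a. g (- a) = - g a" using g by (rule lin_neg)
        have l1: "\<And>u. Vector_Spaces.linear sL sL (\<lambda>x. br x u)" using bl unfolding bilinear_map_def by blast
        have e: "\<And>a b. \<phi> (br (g b) (f a)) = - \<phi> (br (f a) (g b))"
          using br_antisym[OF assms(3)] lin_neg[OF ph] by metis
        have "sum_list (map (\<lambda>(p,q). \<phi> (br (g q) (f p))) (\<Delta> c))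
            = - sum_list (map (\<lambda>(p,q). \<phi> (br (g p) (f q))) (\<Delta> c))"
          using skew_sum[OF assms(2) b] .
        then have "- \<phi> (Phi \<Delta> br f g c) = - \<phi> (Phi \<Delta> br g f c)"
          unfolding Phi_def by (simp add: lin_sum_list[OF ph] case_prod_unfold e sum_list_neg_map)
        then show "\<phi> (Phi \<Delta> br g f c - Phi \<Delta> br f g c) = 0"
          using lin_add[OF ph] lin_neg[OF ph] by (metis diff_conv_add_uminus neg_equal_iff_equal right_minus)
      qed
      then show "Phi \<Delta> br g f c = Phi \<Delta> br f g c" by simp
    qed
  }
  fix f g h :: "'c \<Rightarrow> 'l" and c
  assume f: "Vector_Spaces.linear sC sL f" and g: "Vector_Spaces.linear sC sL g"
    and h: "Vector_Spaces.linear sC sL h"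
  show "Phi \<Delta> br f (Phi \<Delta> br g h) c + Phi \<Delta> br g (Phi \<Delta> br h f) c
                 + Phi \<Delta> br h (Phi \<Delta> br f g) c = 0"
  proof (rule separate[OF vs])
    fix \<phi> :: "'l \<Rightarrow> 'k" assume ph: "Vector_Spaces.linear sL (*) \<phi>"
    have t2: "trilinear_form sC (\<lambda>x y z. \<phi> (br (g x) (br (h y) (f z))))"
      by (rule tril_comp[OF bl g h f ph])
    have t3: "trilinear_form sC (\<lambda>x y z. \<phi> (br (h x) (br (f y) (g z))))"
      by (rule tril_comp[OF bl h f g ph])
    have c2: "NR \<Delta> c (\<lambda>x y z. \<phi> (br (g x) (br (h y) (f z))))
        = NR \<Delta> c (\<lambda>x y z. \<phi> (br (g y) (br (h z) (f x))))"
      using NR_cyc[OF assms(1,2) tril_perm3[OF tril_perm3[OF t2]]] by simp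
    have c3: "NR \<Delta> c (\<lambda>x y z. \<phi> (br (h x) (br (f y) (g z))))
        = NR \<Delta> c (\<lambda>x y z. \<phi> (br (h z) (br (f x) (g y))))"
      using NR_cyc[OF assms(1,2) t3] by simp
    have pj: "\<And>x y z. \<phi> (br (f x) (br (g y) (h z))) + \<phi> (br (g y) (br (h z) (f x)))
        + \<phi> (br (h z) (br (f x) (g y))) = 0"
      using jac lin_add[OF ph] lin_zero[OF ph] by metis
    show "\<phi> (Phi \<Delta> br f (Phi \<Delta> br g h) c + Phi \<Delta> br g (Phi \<Delta> br h f) c
                 + Phi \<Delta> br h (Phi \<Delta> br f g) c) = 0"
      by (simp add: lin_add[OF ph] NR_Phi[OF bl ph] c2 c3 NR_add3 pj NR_zero)
  qed
qed

end
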